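(* Let $G$ be a graph on $n$ vertices. If $G$ has a spanning subgraph $H$ (i.e. $H$ has the same vertex set as $G$ and $E(H)\subseteq E(G)$) such that $H$ is bipartite and $\delta(H)\geq 2$, then $F(G)\geq \lceil n/2\rceil$.
   Context: All graphs are finite and simple. Given a graph $G=(V,E)$ and a set $S\subseteq V$ of filled vertices, the color change rule is: if a filled vertex $v$ has exactly one unfilled neighbor $w$, then $w$ becomes filled. The derived set of $S$ is the set of filled vertices obtained after applying the rule until no further application is possible. $S$ is a zero forcing set if its derived set is $V$; otherwise $S$ is a failed zero forcing set. The failed zero forcing number $F(G)$ is the maximum size of a failed zero forcing set of $G$. *)

theory Defs
  imports Complex_Main
begin

definition simple_graph :: "'a set \<Rightarrow> ('a \<Rightarrow> 'a \<Rightarrow> bool) \<Rightarrow> bool" where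
  "simple_graph V E \<longleftrightarrow> finite V \<and> (\<forall>u v. E u v \<longrightarrow> E v u)
     \<and> (\<forall>v. \<not> E v v) \<and> (\<forall>u v. E u v \<longrightarrow> u \<in> V \<and> v \<in> V)"

inductive_set derived :: "'a set \<Rightarrow> ('a \<Rightarrow> 'a \<Rightarrow> bool) \<Rightarrow> 'a set \<Rightarrow> 'a set"
  for V :: "'a set" and E :: "'a \<Rightarrow> 'a \<Rightarrow> bool" and S :: "'a set" where
  init: "x \<in> S \<Longrightarrow> x \<in> derived V E S"
| force: "\<lbrakk> v \<in> derived V E S; E v w; w \<in> V;
            \<forall>u. E v u \<and> u \<noteq> w \<longrightarrow> u \<in> derived V E S \<rbrakk> \<Longrightarrow> w \<in> derived V E S"

definition zero_forcing_set :: "'a set \<Rightarrow> ('a \<Rightarrow> 'a \<Rightarrow> bool) \<Rightarrow> 'a set \<Rightarrow> bool" where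
  "zero_forcing_set V E S \<longleftrightarrow> S \<subseteq> V \<and> derived V E S = V"

definition failed_zero_forcing_set :: "'a set \<Rightarrow> ('a \<Rightarrow> 'a \<Rightarrow> bool) \<Rightarrow> 'a set \<Rightarrow> bool" where
  "failed_zero_forcing_set V E S \<longleftrightarrow> S \<subseteq> V \<and> derived V E S \<noteq> V"

definition failed_zf_number :: "'a set \<Rightarrow> ('a \<Rightarrow> 'a \<Rightarrow> bool) \<Rightarrow> nat" where
  "failed_zf_number V E = Max {card S | S. failed_zero_forcing_set V E S}"

definition bipartite :: "'a set \<Rightarrow> ('a \<Rightarrow> 'a \<Rightarrow> bool) \<Rightarrow> bool" where
  "bipartite V E \<longleftrightarrow> (\<exists>A \<subseteq> V. \<forall>u v. E u v \<longrightarrow> (u \<in> A \<longleftrightarrow> v \<notin> A))"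

definition degree :: "'a set \<Rightarrow> ('a \<Rightarrow> 'a \<Rightarrow> bool) \<Rightarrow> 'a \<Rightarrow> nat" where
  "degree V E v = card {u \<in> V. E v u}"

definition min_degree_ge :: "'a set \<Rightarrow> ('a \<Rightarrow> 'a \<Rightarrow> bool) \<Rightarrow> nat \<Rightarrow> bool" where
  "min_degree_ge V E k \<longleftrightarrow> (\<forall>v \<in> V. k \<le> degree V E v)"

end

theory Submission
  imports Defs
begin

lemma two_elems:
  assumes "2 \<le> card X" shows "\<exists>a b. a \<noteq> b \<and> a \<in> X \<and> b \<in> X"
proof (rule ccontr)
  assume "\<not> ?thesis"
  hence "\<forall>a\<in>X. \<forall>b\<in>X. a = b" by blast
  moreover have "finite X" using assms card.infinite by fastforce
  ultimately have "card X \<le> Suc 0" using card_le_Suc0_iff_eq by blast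
  with assms show False by simp
qed

lemma fort_failed:
  assumes sg: "simple_graph V E" and FV: "F \<subseteq> V" and Fne: "F \<noteq> {}"
    and two: "\<forall>v\<in>V-F. \<exists>u1 u2. u1 \<noteq> u2 \<and> u1 \<in> F \<and> u2 \<in> F \<and> E v u1 \<and> E v u2"
  shows "failed_zero_forcing_set V E (V - F)"
proof -
  have "x \<in> derived V E (V - F) \<Longrightarrow> x \<notin> F" for x
  proof (induction rule: derived.induct)
    case (init x) then show ?case by blast
  next
    case (force v w)
    show ?case
    proof
      assume wF: "w \<in> F"
      have "v \<in> V" using sg force.hyps unfolding simple_graph_def by blast
      with force.IH obtain u1 u2 where "u1 \<noteq> u2" "u1 \<in> F" "u2 \<in> F" "E v u1" "E v u2"
        using two by blast
      then obtain u where "u \<noteq> w" "u \<in> F" "E v u" by metis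
      with force show False by blast
    qed
  qed
  moreover obtain f where "f \<in> F" using Fne by blast
  ultimately have "f \<notin> derived V E (V - F)" by blast
  with FV \<open>f \<in> F\<close> show ?thesis unfolding failed_zero_forcing_set_def by blast
qed

theorem corollary3:
  fixes V :: "'a set" and E EH :: "'a \<Rightarrow> 'a \<Rightarrow> bool"
  assumes "simple_graph V E"
    and "simple_graph V EH"
    and "\<forall>u v. EH u v \<longrightarrow> E u v"
    and "bipartite V EH"
    and "min_degree_ge V EH 2"
  shows "\<lceil>real (card V) / 2\<rceil> \<le> int (failed_zf_number V E)"
proof (cases "V = {}")
  case True then show ?thesis by simp
next
  case False
  have finV: "finite V" using assms(1) unfolding simple_graph_def by blast
  obtain A where AV: "A \<subseteq> V" and Abip: "\<forall>u v. EH u v \<longrightarrow> (u \<in> A \<longleftrightarrow> v \<notin> A)"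
    using assms(4) unfolding bipartite_def by blast
  have nb: "\<exists>u1 u2. u1 \<noteq> u2 \<and> u1 \<in> V \<and> u2 \<in> V \<and> EH v u1 \<and> EH v u2" if "v \<in> V" for v
  proof -
    have "2 \<le> card {u \<in> V. EH v u}" using assms(5) that
      unfolding min_degree_ge_def degree_def by blast
    from two_elems[OF this] show ?thesis by blast
  qed
  define F where "F = (if card A \<le> card (V - A) then A else V - A)"
  have FV: "F \<subseteq> V" using AV unfolding F_def by auto
  have two: "\<forall>v\<in>V-F. \<exists>u1 u2. u1 \<noteq> u2 \<and> u1 \<in> F \<and> u2 \<in> F \<and> E v u1 \<and> E v u2"
  proof
    fix v assume v: "v \<in> V - F"
    then obtain u1 u2 where u: "u1 \<noteq> u2" "u1 \<in> V" "u2 \<in> V" "EH v u1" "EH v u2"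
      using nb by blast
    have "u1 \<in> F" "u2 \<in> F" using u v Abip unfolding F_def by (auto split: if_splits)
    with u assms(3) show "\<exists>u1 u2. u1 \<noteq> u2 \<and> u1 \<in> F \<and> u2 \<in> F \<and> E v u1 \<and> E v u2" by blast
  qed
  have Fne: "F \<noteq> {}"
  proof
    assume "F = {}"
    obtain v where "v \<in> V" using False by blast
    with two \<open>F = {}\<close> show False by blast
  qed
  have fail: "failed_zero_forcing_set V E (V - F)"
    using fort_failed[OF assms(1) FV Fne two] .
  have cardF: "card F \<le> card (V - F)"
    using AV finV unfolding F_def by (auto simp: Diff_Diff_Int Int_absorb1)
  have cs: "card (V - F) + card F = card V"
    using FV finV by (metis card_Diff_subset card_mono diff_add finite_subset)
  have fin: "finite {card S | S. failed_zero_forcing_set V E S}"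
  proof (rule finite_subset[of _ "{..card V}"])
    show "{card S | S. failed_zero_forcing_set V E S} \<subseteq> {..card V}"
      using finV by (auto simp: failed_zero_forcing_set_def intro: card_mono)
  qed simp
  have "card (V - F) \<le> failed_zf_number V E"
    unfolding failed_zf_number_def using fin fail by (intro Max_ge) auto
  moreover have "\<lceil>real (card V) / 2\<rceil> \<le> int (card (V - F))"
    using cs cardF by (simp add: ceiling_le_iff)
  ultimately show ?thesis by linarith
qed

end
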